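(* Consider any correlated multi-secret sharing scheme $p_{M_{12}M_{23}M_{31}|XYZ}$ for a joint distribution $p_{XYZ}$ with full support on $\mathcal X\times\mathcal Y\times\mathcal Z$. Then (1) $H(M_{12})\ge\max\{\sup_{p_{X'Y'Z'}}(RI(X';Z')+H(X',Y'|Z')),\ \sup_{p_{X'Y'Z'}}(RI(Y';Z')+H(X',Y'|Z'))\}$, where the suprema are over distributions $p_{X'Y'Z'}$ for which the characteristic bipartite graph of $p_{X'Y'}$ is connected; (2) $H(M_{23})\ge\max\{\sup_{p_{X'Y'Z'}}(RI(X';Z')+H(Y',Z'|X')),\ \sup_{p_{X'Y'Z'}}(RI(X';Y')+H(Y',Z'|X'))\}$, where the suprema are over distributions $p_{X'Y'Z'}$ for which the characteristic bipartite graph of $p_{Y'Z'}$ is connected; (3) $H(M_{31})\ge\max\{\sup_{p_{X'Y'Z'}}(RI(Y';Z')+H(X',Z'|Y')),\ \sup_{p_{X'Y'Z'}}(RI(X';Y')+H(X',Z'|Y'))\}$, where the suprema are over distributions $p_{X'Y'Z'}$ for which the characteristic bipartite graph of $p_{X'Z'}$ is connected. The left-hand sides are computed under $p_{XYZ}$ and the scheme; the right-hand sides are computed under $p_{X'Y'Z'}$.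
   Context: A correlated multi-secret sharing (CMSS) scheme for a joint distribution $p_{XYZ}$ on finite sets is a conditional distribution $p_{M_{12}M_{23}M_{31}|XYZ}$ mapping secrets $(X,Y,Z)\sim p_{XYZ}$ probabilistically to shares $(M_{12},M_{23},M_{31})$ such that (correctness) $H(X|M_{12},M_{31})=H(Y|M_{12},M_{23})=H(Z|M_{23},M_{31})=0$ and (privacy) $I((M_{12},M_{31});(Y,Z)|X)=0$, $I((M_{12},M_{23});(X,Z)|Y)=0$, $I((M_{23},M_{31});(X,Y)|Z)=0$. The characteristic bipartite graph of a distribution $p_{UV}$ on $\mathcal U\times\mathcal V$ has vertex set $\mathcal U\cup\mathcal V$ with $u,v$ adjacent iff $p_{UV}(u,v)>0$. Residual information: $RI(U;V)=I(U;V)-H(U\sqcap V)$, where $U\sqcap V$ has maximum entropy among random variables of the form $f(U)=g(V)$ for deterministic $f,g$. *)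

theory Defs
  imports Complex_Main
begin

definition is_pmf :: "('o::finite \<Rightarrow> real) \<Rightarrow> bool" where
  "is_pmf P \<longleftrightarrow> (\<forall>w. 0 \<le> P w) \<and> sum P UNIV = 1"

definition marg :: "('o::finite \<Rightarrow> real) \<Rightarrow> ('o \<Rightarrow> 'v) \<Rightarrow> 'v \<Rightarrow> real" where
  "marg P f v = sum P {w. f w = v}"

text \<open>Shannon entropy (base 2) of the random variable f under P (0 log 0 = 0, as log 2 0 = 0).\<close>
definition ent :: "('o::finite \<Rightarrow> real) \<Rightarrow> ('o \<Rightarrow> 'v) \<Rightarrow> real" where
  "ent P f = - (\<Sum>v\<in>f ` UNIV. marg P f v * log 2 (marg P f v))"

definition cond_ent :: "('o::finite \<Rightarrow> real) \<Rightarrow> ('o \<Rightarrow> 'v) \<Rightarrow> ('o \<Rightarrow> 'w) \<Rightarrow> real" where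
  "cond_ent P f g = ent P (\<lambda>w. (f w, g w)) - ent P g"

definition mut_inf :: "('o::finite \<Rightarrow> real) \<Rightarrow> ('o \<Rightarrow> 'v) \<Rightarrow> ('o \<Rightarrow> 'w) \<Rightarrow> real" where
  "mut_inf P f g = ent P f + ent P g - ent P (\<lambda>w. (f w, g w))"

definition cond_mut_inf :: "('o::finite \<Rightarrow> real) \<Rightarrow> ('o \<Rightarrow> 'v) \<Rightarrow> ('o \<Rightarrow> 'w) \<Rightarrow> ('o \<Rightarrow> 'u) \<Rightarrow> real" where
  "cond_mut_inf P f g k = ent P (\<lambda>w. (f w, k w)) + ent P (\<lambda>w. (g w, k w))
                          - ent P (\<lambda>w. (f w, g w, k w)) - ent P k"

definition common_inf :: "('o::finite \<Rightarrow> real) \<Rightarrow> ('o \<Rightarrow> 'u) \<Rightarrow> ('o \<Rightarrow> 'v) \<Rightarrow> real" where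
  "common_inf P U V = Sup {ent P (\<lambda>w. f (U w)) | (f :: 'u \<Rightarrow> nat) (g :: 'v \<Rightarrow> nat).
                             \<forall>w. 0 < P w \<longrightarrow> f (U w) = g (V w)}"

definition res_inf :: "('o::finite \<Rightarrow> real) \<Rightarrow> ('o \<Rightarrow> 'u) \<Rightarrow> ('o \<Rightarrow> 'v) \<Rightarrow> real" where
  "res_inf P U V = mut_inf P U V - common_inf P U V"

text \<open>Characteristic bipartite graph of a joint pmf q on 'u \<times> 'v: vertex set 'u + 'v
  (disjoint union of the alphabets), u ~ v iff q(u,v) > 0. Connectedness.\<close>
definition char_adj :: "('u \<times> 'v \<Rightarrow> real) \<Rightarrow> ('u + 'v) \<Rightarrow> ('u + 'v) \<Rightarrow> bool" where
  "char_adj q a b \<longleftrightarrow> (\<exists>u v. ((a = Inl u \<and> b = Inr v) \<or> (a = Inr v \<and> b = Inl u)) \<and> 0 < q (u, v))"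

definition char_graph_connected :: "('u \<times> 'v \<Rightarrow> real) \<Rightarrow> bool" where
  "char_graph_connected q \<longleftrightarrow> (\<forall>a b. (char_adj q)\<^sup>*\<^sup>* a b)"

text \<open>Secrets (X,Y,Z) and shares (M12,M23,M31): outcomes ((x,y,z),(m12,m23,m31)).\<close>
definition joint :: "('x \<times> 'y \<times> 'z \<Rightarrow> real) \<Rightarrow> ('x \<times> 'y \<times> 'z \<Rightarrow> 'a \<times> 'b \<times> 'c \<Rightarrow> real)
                      \<Rightarrow> ('x \<times> 'y \<times> 'z) \<times> ('a \<times> 'b \<times> 'c) \<Rightarrow> real" where
  "joint p q = (\<lambda>(s, m). p s * q s m)"

definition sX :: "('x \<times> 'y \<times> 'z) \<times> ('a \<times> 'b \<times> 'c) \<Rightarrow> 'x" where "sX w = fst (fst w)"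
definition sY :: "('x \<times> 'y \<times> 'z) \<times> ('a \<times> 'b \<times> 'c) \<Rightarrow> 'y" where "sY w = fst (snd (fst w))"
definition sZ :: "('x \<times> 'y \<times> 'z) \<times> ('a \<times> 'b \<times> 'c) \<Rightarrow> 'z" where "sZ w = snd (snd (fst w))"
definition m12 :: "('x \<times> 'y \<times> 'z) \<times> ('a \<times> 'b \<times> 'c) \<Rightarrow> 'a" where "m12 w = fst (snd w)"
definition m23 :: "('x \<times> 'y \<times> 'z) \<times> ('a \<times> 'b \<times> 'c) \<Rightarrow> 'b" where "m23 w = fst (snd (snd w))"
definition m31 :: "('x \<times> 'y \<times> 'z) \<times> ('a \<times> 'b \<times> 'c) \<Rightarrow> 'c" where "m31 w = snd (snd (snd w))"

text \<open>CMSS scheme q for p (conditional pmf of shares given secrets; correctness; privacy).\<close>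
definition is_CMSS :: "('x::finite \<times> 'y::finite \<times> 'z::finite \<Rightarrow> real)
     \<Rightarrow> ('x \<times> 'y \<times> 'z \<Rightarrow> 'a::finite \<times> 'b::finite \<times> 'c::finite \<Rightarrow> real) \<Rightarrow> bool" where
  "is_CMSS p q \<longleftrightarrow>
     (\<forall>s. is_pmf (q s)) \<and>
     (let P = joint p q in
       cond_ent P sX (\<lambda>w. (m12 w, m31 w)) = 0 \<and>
       cond_ent P sY (\<lambda>w. (m12 w, m23 w)) = 0 \<and>
       cond_ent P sZ (\<lambda>w. (m23 w, m31 w)) = 0 \<and>
       cond_mut_inf P (\<lambda>w. (m12 w, m31 w)) (\<lambda>w. (sY w, sZ w)) sX = 0 \<and>
       cond_mut_inf P (\<lambda>w. (m12 w, m23 w)) (\<lambda>w. (sX w, sZ w)) sY = 0 \<and>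
       cond_mut_inf P (\<lambda>w. (m23 w, m31 w)) (\<lambda>w. (sX w, sY w)) sZ = 0)"

definition margXY :: "('x \<times> 'y \<times> 'z::finite \<Rightarrow> real) \<Rightarrow> 'x \<times> 'y \<Rightarrow> real" where
  "margXY p = (\<lambda>(x, y). \<Sum>z\<in>UNIV. p (x, y, z))"
definition margYZ :: "('x::finite \<times> 'y \<times> 'z \<Rightarrow> real) \<Rightarrow> 'y \<times> 'z \<Rightarrow> real" where
  "margYZ p = (\<lambda>(y, z). \<Sum>x\<in>UNIV. p (x, y, z))"
definition margXZ :: "('x \<times> 'y::finite \<times> 'z \<Rightarrow> real) \<Rightarrow> 'x \<times> 'z \<Rightarrow> real" where
  "margXZ p = (\<lambda>(x, z). \<Sum>y\<in>UNIV. p (x, y, z))"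

definition pX :: "'x \<times> 'y \<times> 'z \<Rightarrow> 'x" where "pX t = fst t"
definition pY :: "'x \<times> 'y \<times> 'z \<Rightarrow> 'y" where "pY t = fst (snd t)"
definition pZ :: "'x \<times> 'y \<times> 'z \<Rightarrow> 'z" where "pZ t = snd (snd t)"

end

theory Submission
  imports Defs
begin

definition mgf :: "('o::finite \<Rightarrow> real) \<Rightarrow> ('o \<Rightarrow> 'v) \<Rightarrow> 'o \<Rightarrow> real" where
  "mgf P f w = (\<Sum>w'\<in>UNIV. if f w' = f w then P w' else 0)"

lemma mgf_set: "mgf P f w = sum P {w'. f w' = f w}"
  unfolding mgf_def by (simp add: sum.inter_filter[symmetric])

lemma ent_alt: "ent P f = - (\<Sum>w\<in>UNIV. P w * log 2 (mgf P f w))"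
proof -
  have "(\<Sum>v\<in>f ` UNIV. marg P f v * log 2 (marg P f v))
      = (\<Sum>v\<in>f ` UNIV. \<Sum>w\<in>{w. w \<in> UNIV \<and> f w = v}. P w * log 2 (mgf P f w))"
  proof (rule sum.cong[OF refl])
    fix v assume "v \<in> f ` UNIV"
    have "(\<Sum>w\<in>{w. w \<in> UNIV \<and> f w = v}. P w * log 2 (mgf P f w))
        = (\<Sum>w\<in>{w. f w = v}. P w * log 2 (marg P f v))"
      by (rule sum.cong) (auto simp: mgf_set marg_def)
    also have "\<dots> = marg P f v * log 2 (marg P f v)"
      by (simp add: marg_def sum_distrib_right)
    finally show "marg P f v * log 2 (marg P f v) = (\<Sum>w\<in>{w. w \<in> UNIV \<and> f w = v}. P w * log 2 (mgf P f w))" by simp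
  qed
  also have "\<dots> = (\<Sum>w\<in>UNIV. P w * log 2 (mgf P f w))"
    by (rule sum.group) auto
  finally show ?thesis unfolding ent_def by simp
qed

lemma mgf_ge: assumes "\<forall>w. 0 \<le> P w" shows "P w \<le> mgf P f w"
proof -
  have "P w = sum P {w}" by simp
  also have "\<dots> \<le> sum P {w'. f w' = f w}"
    by (rule sum_mono2) (use assms in auto)
  finally show ?thesis by (simp add: mgf_set)
qed

lemma ent_cong_supp:
  assumes nn: "\<forall>w. 0 \<le> P w"
    and eq: "\<And>w w'. 0 < P w \<Longrightarrow> 0 < P w' \<Longrightarrow> (f w = f w') = (h w = h w')"
  shows "ent P f = ent P h"
proof -
  have "P w * log 2 (mgf P f w) = P w * log 2 (mgf P h w)" for w
  proof (cases "0 < P w")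
    case True
    have "mgf P f w = mgf P h w" unfolding mgf_def
    proof (rule sum.cong[OF refl])
      fix w' show "(if f w' = f w then P w' else 0) = (if h w' = h w then P w' else 0)"
        using eq[OF _ True, of w'] nn[rule_format, of w'] by (cases "0 < P w'") auto
    qed
    then show ?thesis by simp
  next
    case False then have "P w = 0" using nn[rule_format, of w] by linarith
    then show ?thesis by simp
  qed
  then have "(\<Sum>w\<in>UNIV. P w * log 2 (mgf P f w)) = (\<Sum>w\<in>UNIV. P w * log 2 (mgf P h w))"
    by (intro sum.cong) auto
  then show ?thesis unfolding ent_alt by simp
qed



lemma pmf_nn: "is_pmf P \<Longrightarrow> 0 \<le> P w" by (simp add: is_pmf_def)
lemma pmf_sum: "is_pmf P \<Longrightarrow> sum P UNIV = 1" by (simp add: is_pmf_def)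

lemma mgf_nn: "\<forall>w. 0 \<le> P w \<Longrightarrow> 0 \<le> mgf P f w"
  unfolding mgf_def by (intro sum_nonneg) auto

locale cmi_setup =
  fixes P :: "'o::finite \<Rightarrow> real" and F :: "'o \<Rightarrow> 'f" and G :: "'o \<Rightarrow> 'g" and K :: "'o \<Rightarrow> 'k"
  assumes pmf: "is_pmf P"
begin

definition "a w = mgf P (\<lambda>w. (F w, K w)) w"
definition "b w = mgf P (\<lambda>w. (G w, K w)) w"
definition "c w = mgf P (\<lambda>w. (F w, G w, K w)) w"
definition "d w = mgf P K w"
definition "cc w1 w2 = (\<Sum>w\<in>UNIV. if F w = F w1 \<and> G w = G w2 \<and> K w = K w1 then P w else 0)"

lemma nn: "0 \<le> P w" using pmf by (simp add: is_pmf_def)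
lemma nnall: "\<forall>w. 0 \<le> P w" using nn by blast

lemma pos_abcd: assumes "0 < P w" shows "0 < a w" "0 < b w" "0 < c w" "0 < d w"
  using mgf_ge[OF nnall] assms unfolding a_def b_def c_def d_def by (meson less_le_trans)+

lemma S_eq: "(\<Sum>w\<in>UNIV. P w * (a w * b w / (c w * d w)))
   = (\<Sum>w1\<in>UNIV. \<Sum>w2\<in>UNIV. if K w1 = K w2 \<and> cc w1 w2 \<noteq> 0 then P w1 * P w2 / d w1 else 0)"
proof -
  have 1: "P w * (a w * b w / (c w * d w)) = (\<Sum>w1\<in>UNIV. \<Sum>w2\<in>UNIV.
     if F w1 = F w \<and> K w1 = K w \<and> G w2 = G w \<and> K w2 = K w then P w * P w1 * P w2 / (c w * d w) else 0)" for w
  proof -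
    have "a w * b w = (\<Sum>w1\<in>UNIV. \<Sum>w2\<in>UNIV. (if F w1 = F w \<and> K w1 = K w then P w1 else 0) * (if G w2 = G w \<and> K w2 = K w then P w2 else 0))"
      unfolding a_def b_def mgf_def by (simp add: sum_product)
    then have "P w * (a w * b w / (c w * d w)) = (P w / (c w * d w)) * (\<Sum>w1\<in>UNIV. \<Sum>w2\<in>UNIV. (if F w1 = F w \<and> K w1 = K w then P w1 else 0) * (if G w2 = G w \<and> K w2 = K w then P w2 else 0))"
      by simp
    also have "\<dots> = (\<Sum>w1\<in>UNIV. \<Sum>w2\<in>UNIV. (P w / (c w * d w)) * ((if F w1 = F w \<and> K w1 = K w then P w1 else 0) * (if G w2 = G w \<and> K w2 = K w then P w2 else 0)))"
      by (simp add: sum_distrib_left)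
    also have "\<dots> = (\<Sum>w1\<in>UNIV. \<Sum>w2\<in>UNIV.
     if F w1 = F w \<and> K w1 = K w \<and> G w2 = G w \<and> K w2 = K w then P w * P w1 * P w2 / (c w * d w) else 0)"
      by (intro sum.cong) auto
    finally show ?thesis .
  qed
  have 2: "(\<Sum>w\<in>UNIV. if F w1 = F w \<and> K w1 = K w \<and> G w2 = G w \<and> K w2 = K w then P w * P w1 * P w2 / (c w * d w) else 0)
     = (if K w1 = K w2 \<and> cc w1 w2 \<noteq> 0 then P w1 * P w2 / d w1 else 0)" for w1 w2
  proof -
    have "(\<Sum>w\<in>UNIV. if F w1 = F w \<and> K w1 = K w \<and> G w2 = G w \<and> K w2 = K w then P w * P w1 * P w2 / (c w * d w) else 0)
      = (\<Sum>w\<in>UNIV. (if K w1 = K w2 then P w1 * P w2 / (cc w1 w2 * d w1) else 0) * (if F w = F w1 \<and> G w = G w2 \<and> K w = K w1 then P w else 0))"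
    proof (rule sum.cong[OF refl])
      fix w
      show "(if F w1 = F w \<and> K w1 = K w \<and> G w2 = G w \<and> K w2 = K w then P w * P w1 * P w2 / (c w * d w) else 0)
        = (if K w1 = K w2 then P w1 * P w2 / (cc w1 w2 * d w1) else 0) * (if F w = F w1 \<and> G w = G w2 \<and> K w = K w1 then P w else 0)"
      proof (cases "F w1 = F w \<and> K w1 = K w \<and> G w2 = G w \<and> K w2 = K w")
        case True
        then have "c w = cc w1 w2" unfolding c_def cc_def mgf_def by (intro sum.cong) auto
        moreover have "d w = d w1" using True unfolding d_def mgf_def by simp
        ultimately show ?thesis using True by simp
      qed auto
    qed
    also have "\<dots> = (if K w1 = K w2 then P w1 * P w2 / (cc w1 w2 * d w1) else 0) * cc w1 w2"
      unfolding cc_def by (simp add: sum_distrib_left)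
    also have "\<dots> = (if K w1 = K w2 \<and> cc w1 w2 \<noteq> 0 then P w1 * P w2 / d w1 else 0)"
      by auto
    finally show ?thesis .
  qed
  have "(\<Sum>w\<in>UNIV. P w * (a w * b w / (c w * d w))) = (\<Sum>w\<in>UNIV. \<Sum>w1\<in>UNIV. \<Sum>w2\<in>UNIV.
     if F w1 = F w \<and> K w1 = K w \<and> G w2 = G w \<and> K w2 = K w then P w * P w1 * P w2 / (c w * d w) else 0)"
    using 1 by simp
  also have "\<dots> = (\<Sum>w1\<in>UNIV. \<Sum>w\<in>UNIV. \<Sum>w2\<in>UNIV.
     if F w1 = F w \<and> K w1 = K w \<and> G w2 = G w \<and> K w2 = K w then P w * P w1 * P w2 / (c w * d w) else 0)"
    by (rule sum.swap)
  also have "\<dots> = (\<Sum>w1\<in>UNIV. \<Sum>w2\<in>UNIV. \<Sum>w\<in>UNIV.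
     if F w1 = F w \<and> K w1 = K w \<and> G w2 = G w \<and> K w2 = K w then P w * P w1 * P w2 / (c w * d w) else 0)"
    by (intro sum.cong refl sum.swap)
  also have "\<dots> = (\<Sum>w1\<in>UNIV. \<Sum>w2\<in>UNIV. if K w1 = K w2 \<and> cc w1 w2 \<noteq> 0 then P w1 * P w2 / d w1 else 0)"
    using 2 by simp
  finally show ?thesis .
qed

lemma T_eq: "(\<Sum>w1\<in>UNIV. \<Sum>w2\<in>UNIV. if K w1 = K w2 then P w1 * P w2 / d w1 else 0) = 1"
proof -
  have "(\<Sum>w2\<in>UNIV. if K w1 = K w2 then P w1 * P w2 / d w1 else 0) = P w1" for w1
  proof -
    have "(\<Sum>w2\<in>UNIV. if K w1 = K w2 then P w1 * P w2 / d w1 else 0) = (P w1 / d w1) * d w1"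
      unfolding d_def mgf_def by (auto simp: sum_distrib_left intro!: sum.cong)
    also have "\<dots> = P w1"
    proof (cases "d w1 = 0")
      case True
      then have "P w1 = 0" using mgf_ge[OF nnall, of w1 K] nn[of w1] unfolding d_def by linarith
      then show ?thesis by simp
    qed simp
    finally show ?thesis .
  qed
  then show ?thesis using pmf by (simp add: is_pmf_def)
qed

lemma cmi_alt: "cond_mut_inf P F G K = - (\<Sum>w\<in>UNIV. P w * log 2 (a w)) - (\<Sum>w\<in>UNIV. P w * log 2 (b w))
   + (\<Sum>w\<in>UNIV. P w * log 2 (c w)) + (\<Sum>w\<in>UNIV. P w * log 2 (d w))"
  unfolding cond_mut_inf_def ent_alt a_def b_def c_def d_def by simp

definition "x w = a w * b w / (c w * d w)"
definition "r w = P w * (ln (c w) + ln (d w) - ln (a w) - ln (b w)) - P w * (1 - x w)"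

lemma r_nn: "0 \<le> r w"
proof (cases "0 < P w")
  case True
  note p = pos_abcd[OF True]
  have xp: "0 < x w" unfolding x_def using p by simp
  have lnx: "ln (x w) = ln (a w) + ln (b w) - ln (c w) - ln (d w)"
    unfolding x_def using p by (simp add: ln_div ln_mult)
  have e: "ln (c w) + ln (d w) - ln (a w) - ln (b w) = - ln (x w)" using lnx by linarith
  have "r w = P w * (x w - 1 - ln (x w))" unfolding r_def e by (simp add: algebra_simps)
  moreover have "0 \<le> x w - 1 - ln (x w)" using ln_le_minus_one[OF xp] by linarith
  ultimately show ?thesis using nn[of w] by simp
next
  case False then have "P w = 0" using nn[of w] by linarith
  then show ?thesis unfolding r_def by simp
qed

lemma ln_sum: "ln 2 * cond_mut_inf P F G K = sum r UNIV + 1 - (\<Sum>w\<in>UNIV. P w * x w)"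
proof -
  have L: "ln 2 * (\<Sum>w\<in>UNIV. P w * log 2 (h w)) = (\<Sum>w\<in>UNIV. P w * ln (h w))" for h :: "'o \<Rightarrow> real"
    by (simp add: sum_distrib_left log_def)
  have "ln 2 * cond_mut_inf P F G K = - (ln 2 * (\<Sum>w\<in>UNIV. P w * log 2 (a w))) - (ln 2 * (\<Sum>w\<in>UNIV. P w * log 2 (b w)))
   + (ln 2 * (\<Sum>w\<in>UNIV. P w * log 2 (c w))) + (ln 2 * (\<Sum>w\<in>UNIV. P w * log 2 (d w)))"
    unfolding cmi_alt by (simp add: algebra_simps)
  also have "\<dots> = - (\<Sum>w\<in>UNIV. P w * ln (a w)) - (\<Sum>w\<in>UNIV. P w * ln (b w))
   + (\<Sum>w\<in>UNIV. P w * ln (c w)) + (\<Sum>w\<in>UNIV. P w * ln (d w))" unfolding L ..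
  also have "\<dots> = (\<Sum>w\<in>UNIV. P w * (ln (c w) + ln (d w) - ln (a w) - ln (b w)))"
    by (simp add: sum.distrib sum_subtractf algebra_simps)
  also have "\<dots> = sum r UNIV + (\<Sum>w\<in>UNIV. P w * (1 - x w))"
    unfolding r_def by (simp add: sum_subtractf)
  also have "(\<Sum>w\<in>UNIV. P w * (1 - x w)) = 1 - (\<Sum>w\<in>UNIV. P w * x w)"
    using pmf by (simp add: algebra_simps sum_subtractf is_pmf_def)
  finally show ?thesis by simp
qed

lemma S_le: "(\<Sum>w\<in>UNIV. P w * x w) \<le> 1"
proof -
  have "(\<Sum>w\<in>UNIV. P w * x w) = (\<Sum>w1\<in>UNIV. \<Sum>w2\<in>UNIV. if K w1 = K w2 \<and> cc w1 w2 \<noteq> 0 then P w1 * P w2 / d w1 else 0)"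
    unfolding x_def by (rule S_eq)
  also have "\<dots> \<le> (\<Sum>w1\<in>UNIV. \<Sum>w2\<in>UNIV. if K w1 = K w2 then P w1 * P w2 / d w1 else 0)"
    using nn mgf_nn[OF nnall] unfolding d_def by (intro sum_mono) (auto intro!: divide_nonneg_nonneg)
  finally show ?thesis using T_eq by simp
qed

theorem cmi_nonneg: "0 \<le> cond_mut_inf P F G K"
proof -
  have "0 \<le> sum r UNIV" using r_nn by (simp add: sum_nonneg)
  then have "0 \<le> ln 2 * cond_mut_inf P F G K" using ln_sum S_le by linarith
  then show ?thesis by (simp add: zero_le_mult_iff)
qed


lemma r_form: assumes "0 < P w" shows "r w = P w * (x w - 1 - ln (x w))"
proof -
  note p = pos_abcd[OF assms]
  have lnx: "ln (x w) = ln (a w) + ln (b w) - ln (c w) - ln (d w)"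
    unfolding x_def using p by (simp add: ln_div ln_mult)
  have e: "ln (c w) + ln (d w) - ln (a w) - ln (b w) = - ln (x w)" using lnx by linarith
  show "r w = P w * (x w - 1 - ln (x w))" unfolding r_def e by (simp add: algebra_simps)
qed

theorem cmi_zero:
  assumes z: "cond_mut_inf P F G K = 0"
  shows "\<And>w1 w2. 0 < P w1 \<Longrightarrow> 0 < P w2 \<Longrightarrow> K w1 = K w2 \<Longrightarrow> (\<exists>w. 0 < P w \<and> F w = F w1 \<and> G w = G w2 \<and> K w = K w1)"
    and "\<And>w. 0 < P w \<Longrightarrow> c w * d w = a w * b w"
proof -
  have s0: "0 \<le> sum r UNIV" using r_nn by (simp add: sum_nonneg)
  have e: "sum r UNIV + 1 - (\<Sum>w\<in>UNIV. P w * x w) = 0" using ln_sum z by simp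
  have r0: "sum r UNIV = 0" and S1: "(\<Sum>w\<in>UNIV. P w * x w) = 1" using s0 e S_le by linarith+
  {
    fix w assume pw: "0 < P w"
    have "r w = 0" using r0 r_nn sum_nonneg_eq_0_iff[of UNIV r] by auto
    then have "x w - 1 - ln (x w) = 0" using r_form[OF pw] pw by simp
    moreover have "0 < x w" unfolding x_def using pos_abcd[OF pw] by simp
    ultimately have "x w = 1" using ln_eq_minus_one by force
    then show "c w * d w = a w * b w" unfolding x_def using pos_abcd[OF pw] by (simp add: field_simps)
  }
  fix w1 w2 assume p1: "0 < P w1" and p2: "0 < P w2" and k: "K w1 = K w2"
  let ?D = "\<lambda>w1 w2. (if K w1 = K w2 \<and> cc w1 w2 = 0 then P w1 * P w2 / d w1 else 0)"
  have "(\<Sum>w1\<in>UNIV. \<Sum>w2\<in>UNIV. ?D w1 w2) =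
     (\<Sum>w1\<in>UNIV. \<Sum>w2\<in>UNIV. if K w1 = K w2 then P w1 * P w2 / d w1 else 0) -
     (\<Sum>w1\<in>UNIV. \<Sum>w2\<in>UNIV. if K w1 = K w2 \<and> cc w1 w2 \<noteq> 0 then P w1 * P w2 / d w1 else 0)"
    unfolding sum_subtractf[symmetric] by (intro sum.cong) auto
  also have "\<dots> = 0" using T_eq S_eq S1 unfolding x_def by simp
  finally have D0: "(\<Sum>w1\<in>UNIV. \<Sum>w2\<in>UNIV. ?D w1 w2) = 0" .
  have Dnn: "0 \<le> ?D w1 w2" for w1 w2
    using nn mgf_nn[OF nnall] unfolding d_def by (auto intro!: divide_nonneg_nonneg)
  have "(\<Sum>w2\<in>UNIV. ?D w1 w2) = 0"
    using D0 sum_nonneg_eq_0_iff[of UNIV "\<lambda>w1. \<Sum>w2\<in>UNIV. ?D w1 w2"] Dnn by (auto intro: sum_nonneg)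
  then have "?D w1 w2 = 0"
    using sum_nonneg_eq_0_iff[of UNIV "\<lambda>w2. ?D w1 w2"] Dnn by auto
  moreover have "0 < P w1 * P w2 / d w1" using p1 p2 pos_abcd[OF p1] by simp
  ultimately have "cc w1 w2 \<noteq> 0" using k by (auto split: if_splits)
  then obtain w where "(if F w = F w1 \<and> G w = G w2 \<and> K w = K w1 then P w else 0) \<noteq> 0"
    unfolding cc_def using sum.neutral[of UNIV "\<lambda>w. if F w = F w1 \<and> G w = G w2 \<and> K w = K w1 then P w else 0"] by blast
  then show "\<exists>w. 0 < P w \<and> F w = F w1 \<and> G w = G w2 \<and> K w = K w1"
    using nn[of w] by (auto split: if_splits intro!: exI[of _ w])
qed

end


lemma cmi_nonneg: "is_pmf P \<Longrightarrow> 0 \<le> cond_mut_inf P F G K"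
  using cmi_setup.cmi_nonneg[of P F G K] by (simp add: cmi_setup_def)

lemma ent_const: assumes "is_pmf P" shows "ent P (\<lambda>w. c) = 0"
proof -
  have "mgf P (\<lambda>w. c) w = 1" for w using assms by (simp add: mgf_def is_pmf_def)
  then show ?thesis by (simp add: ent_alt)
qed

lemma ent_mono2: assumes "is_pmf P" shows "ent P G \<le> ent P (\<lambda>w. (F w, G w))"
proof -
  have "ent P (\<lambda>w. (F w, F w, G w)) = ent P (\<lambda>w. (F w, G w))"
    by (rule ent_cong_supp) (use assms in \<open>auto simp: is_pmf_def\<close>)
  then show ?thesis using cmi_nonneg[OF assms, of F F G] unfolding cond_mut_inf_def by simp
qed

lemma ent_subadd: assumes "is_pmf P" shows "ent P (\<lambda>w. (F w, G w)) \<le> ent P F + ent P G"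
proof -
  have "ent P (\<lambda>w. (F w, ())) = ent P F" "ent P (\<lambda>w. (G w, ())) = ent P G"
    "ent P (\<lambda>w. (F w, G w, ())) = ent P (\<lambda>w. (F w, G w))"
    by (rule ent_cong_supp; use assms in \<open>auto simp: is_pmf_def\<close>)+
  then show ?thesis using cmi_nonneg[OF assms, of F G "\<lambda>w. ()"] ent_const[OF assms, of "()"]
    unfolding cond_mut_inf_def by simp
qed

lemma chain_bound:
  assumes pmf: "is_pmf P"
    and fAB: "\<And>w w'. 0 < P w \<Longrightarrow> 0 < P w' \<Longrightarrow> A w = A w' \<Longrightarrow> B w = B w' \<Longrightarrow> U w = U w'"
    and fAC: "\<And>w w'. 0 < P w \<Longrightarrow> 0 < P w' \<Longrightarrow> A w = A w' \<Longrightarrow> C w = C w' \<Longrightarrow> V w = V w'"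
    and ind: "ent P (\<lambda>w. (U w, B w)) = ent P U + ent P B"
    and ci: "ent P (\<lambda>w. (B w, C w, U w, V w, R w)) - ent P (\<lambda>w. (B w, C w, U w, R w))
           = ent P (\<lambda>w. (U w, V w, R w)) - ent P (\<lambda>w. (U w, R w))"
  shows "ent P U + ent P (\<lambda>w. (U w, V w, R w)) - ent P (\<lambda>w. (U w, R w)) \<le> ent P A"
proof -
  have nn: "\<forall>w. 0 \<le> P w" using pmf by (simp add: is_pmf_def)
  have s1: "ent P (\<lambda>w. (A w, B w)) \<le> ent P A + ent P B" by (rule ent_subadd[OF pmf])
  have s3: "0 \<le> cond_mut_inf P A (\<lambda>w. (R w, C w)) (\<lambda>w. (U w, B w))" by (rule cmi_nonneg[OF pmf])
  have r1: "ent P (\<lambda>w. (A w, U w, B w)) = ent P (\<lambda>w. (A w, B w))"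
  proof (rule ent_cong_supp[OF nn])
    fix w w' assume "0 < P w" "0 < P w'"
    then show "((A w, U w, B w) = (A w', U w', B w')) = ((A w, B w) = (A w', B w'))" using fAB[of w w'] by auto
  qed
  have r2: "ent P (\<lambda>w. ((R w, C w), U w, B w)) = ent P (\<lambda>w. (B w, C w, U w, R w))"
    by (rule ent_cong_supp[OF nn]) auto
  have r3: "ent P (\<lambda>w. (A w, (R w, C w), U w, B w)) = ent P (\<lambda>w. (A w, B w, C w, U w, V w, R w))"
  proof (rule ent_cong_supp[OF nn])
    fix w w' assume "0 < P w" "0 < P w'"
    then show "((A w, (R w, C w), U w, B w) = (A w', (R w', C w'), U w', B w')) = ((A w, B w, C w, U w, V w, R w) = (A w', B w', C w', U w', V w', R w'))"
      using fAC[of w w'] by auto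
  qed
  have s5: "ent P (\<lambda>w. (B w, C w, U w, V w, R w)) \<le> ent P (\<lambda>w. (A w, B w, C w, U w, V w, R w))"
    by (rule ent_mono2[OF pmf])
  show ?thesis using s1 s3 r1 r2 r3 s5 ind ci unfolding cond_mut_inf_def by linarith
qed



definition Qf :: "('s \<Rightarrow> 'm::finite \<Rightarrow> real) \<Rightarrow> ('m \<Rightarrow> 'b) \<Rightarrow> 's \<Rightarrow> 'b \<Rightarrow> real" where
  "Qf q \<phi> s b = (\<Sum>m\<in>UNIV. if \<phi> m = b then q s m else 0)"

lemma sum_pair: "(\<Sum>w\<in>(UNIV::('s::finite \<times> 'm::finite) set). h w) = (\<Sum>s\<in>UNIV. \<Sum>m\<in>UNIV. h (s, m))"
  by (simp add: sum.cartesian_product)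

lemma joint_app: "joint p q (s,m) = p s * q s m" by (simp add: joint_def)

lemma mgf_joint: "mgf (joint p q) f (s,m) = (\<Sum>s'\<in>UNIV. \<Sum>m'\<in>UNIV. if f (s',m') = f (s,m) then p s' * q s' m' else 0)"
  unfolding mgf_def by (subst sum_pair) (auto simp: joint_def intro!: sum.cong)

lemma joint_pmf: assumes "is_pmf p" "\<forall>s. is_pmf (q s)" shows "is_pmf (joint p q)"
proof -
  have "sum (joint p q) UNIV = (\<Sum>s\<in>UNIV. p s * (\<Sum>m\<in>UNIV. q s m))"
    by (subst sum_pair) (simp add: joint_app sum_distrib_left)
  also have "\<dots> = 1"
  proof -
    have "sum (q s) UNIV = 1" for s using assms(2) unfolding is_pmf_def by blast
    then show ?thesis using assms(1) unfolding is_pmf_def by simp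
  qed
  finally show ?thesis using assms unfolding is_pmf_def joint_def by auto
qed

lemma Qf_ge: assumes "\<forall>m. 0 \<le> q s m" shows "q s m \<le> Qf q \<phi> s (\<phi> m)"
proof -
  have "q s m = (\<Sum>m'\<in>{m}. q s m')" by simp
  also have "\<dots> \<le> (\<Sum>m'\<in>{m'. \<phi> m' = \<phi> m}. q s m')"
    by (rule sum_mono2) (use assms in auto)
  also have "\<dots> = Qf q \<phi> s (\<phi> m)" unfolding Qf_def by (simp add: sum.inter_filter[symmetric])
  finally show ?thesis .
qed

lemma split_ent:
  assumes pp: "is_pmf p" and qp: "\<forall>s. is_pmf (q s)"
    and hq: "\<And>s s' b. h s = h s' \<Longrightarrow> Qf q \<phi> s b = Qf q \<phi> s' b"
  shows "ent (joint p q) (\<lambda>w. (\<phi> (snd w), h (fst w)))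
       = ent p h - (\<Sum>s\<in>UNIV. \<Sum>m\<in>UNIV. p s * q s m * log 2 (Qf q \<phi> s (\<phi> m)))"
proof -
  have pn: "0 \<le> p s" for s using pp unfolding is_pmf_def by blast
  have qn: "\<forall>m. 0 \<le> q s m" for s using qp unfolding is_pmf_def by blast
  have qs: "sum (q s) UNIV = 1" for s using qp unfolding is_pmf_def by blast
  have M: "mgf (joint p q) (\<lambda>w. (\<phi> (snd w), h (fst w))) (s,m) = mgf p h s * Qf q \<phi> s (\<phi> m)" for s m
  proof -
    have "mgf (joint p q) (\<lambda>w. (\<phi> (snd w), h (fst w))) (s,m)
        = (\<Sum>s'\<in>UNIV. if h s' = h s then p s' * Qf q \<phi> s' (\<phi> m) else 0)"
      unfolding mgf_joint Qf_def by (auto simp: sum_distrib_left intro!: sum.cong)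
    also have "\<dots> = (\<Sum>s'\<in>UNIV. (if h s' = h s then p s' else 0) * Qf q \<phi> s (\<phi> m))"
      by (intro sum.cong refl) (auto dest: hq)
    also have "\<dots> = mgf p h s * Qf q \<phi> s (\<phi> m)" unfolding mgf_def by (simp add: sum_distrib_right)
    finally show ?thesis .
  qed
  have pt: "p s * q s m * log 2 (mgf p h s * Qf q \<phi> s (\<phi> m))
     = p s * q s m * log 2 (mgf p h s) + p s * q s m * log 2 (Qf q \<phi> s (\<phi> m))" for s m
  proof (cases "p s * q s m = 0")
    case False
    have "0 \<le> q s m" using qn[of s] by blast
    then have "0 < p s" "0 < q s m" using pn[of s] False by (auto simp: order.order_iff_strict)
    moreover have "p s \<le> mgf p h s" using mgf_ge[of p s h] pn by blast
    moreover have "q s m \<le> Qf q \<phi> s (\<phi> m)" using Qf_ge[OF qn] .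
    ultimately have "0 < mgf p h s" "0 < Qf q \<phi> s (\<phi> m)" by linarith+
    then show ?thesis by (simp add: log_mult_pos distrib_left)
  qed auto
  have first: "(\<Sum>s\<in>UNIV. \<Sum>m\<in>UNIV. p s * q s m * log 2 (mgf p h s)) = (\<Sum>s\<in>UNIV. p s * log 2 (mgf p h s))"
  proof (rule sum.cong[OF refl])
    fix s
    have "(\<Sum>m\<in>UNIV. p s * q s m * log 2 (mgf p h s)) = p s * log 2 (mgf p h s) * (\<Sum>m\<in>UNIV. q s m)"
      by (simp add: sum_distrib_left) (simp add: mult_ac)
    then show "(\<Sum>m\<in>UNIV. p s * q s m * log 2 (mgf p h s)) = p s * log 2 (mgf p h s)"
      using qs by simp
  qed
  have "ent (joint p q) (\<lambda>w. (\<phi> (snd w), h (fst w)))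
      = - (\<Sum>s\<in>UNIV. \<Sum>m\<in>UNIV. p s * q s m * log 2 (mgf p h s * Qf q \<phi> s (\<phi> m)))"
    unfolding ent_alt by (subst sum_pair) (simp only: M joint_app)
  also have "\<dots> = - (\<Sum>s\<in>UNIV. \<Sum>m\<in>UNIV. p s * q s m * log 2 (mgf p h s))
       - (\<Sum>s\<in>UNIV. \<Sum>m\<in>UNIV. p s * q s m * log 2 (Qf q \<phi> s (\<phi> m)))"
    unfolding pt by (simp add: sum.distrib)
  also have "\<dots> = ent p h - (\<Sum>s\<in>UNIV. \<Sum>m\<in>UNIV. p s * q s m * log 2 (Qf q \<phi> s (\<phi> m)))"
    unfolding first ent_alt by simp
  finally show ?thesis .
qed

lemma transfer_ent:
  assumes pp: "is_pmf p" and qp: "\<forall>s. is_pmf (q s)"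
  shows "ent (joint p q) (\<lambda>w. h (fst w)) = ent p h"
proof -
  have Q1: "Qf q (\<lambda>m. ()) s b = 1" for s b
  proof -
    have "sum (q s) UNIV = 1" using qp unfolding is_pmf_def by blast
    then show ?thesis unfolding Qf_def by simp
  qed
  have "ent (joint p q) (\<lambda>w. h (fst w)) = ent (joint p q) (\<lambda>w. ((\<lambda>m. ()) (snd w), h (fst w)))"
    by (rule ent_cong_supp) (use joint_pmf[OF pp qp] in \<open>auto simp: is_pmf_def simp del: split_paired_All\<close>)
  also have "\<dots> = ent p h" by (subst split_ent[OF pp qp]) (auto simp: Q1)
  finally show ?thesis .
qed



lemma cmi_zero_rect:
  assumes "is_pmf P" "cond_mut_inf P F G K = 0" "0 < P w1" "0 < P w2" "K w1 = K w2"
  shows "\<exists>w. 0 < P w \<and> F w = F w1 \<and> G w = G w2 \<and> K w = K w1"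
  using cmi_setup.cmi_zero(1)[of P F G K w1 w2] assms by (simp add: cmi_setup_def)

lemma cmi_zero_prod:
  assumes "is_pmf P" "cond_mut_inf P F G K = 0" "0 < P w"
  shows "mgf P (\<lambda>w. (F w, G w, K w)) w * mgf P K w = mgf P (\<lambda>w. (F w, K w)) w * mgf P (\<lambda>w. (G w, K w)) w"
  using cmi_setup.cmi_zero(2)[of P F G K w] assms
  by (simp add: cmi_setup_def cmi_setup.a_def cmi_setup.b_def cmi_setup.c_def cmi_setup.d_def)

lemma corr:
  assumes pm: "is_pmf P" and z: "cond_ent P f g = 0" and "0 < P w1" "0 < P w2" "g w1 = g w2"
  shows "f w1 = f w2"
proof -
  have "ent P (\<lambda>w. (f w, f w, g w)) = ent P (\<lambda>w. (f w, g w))"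
    by (rule ent_cong_supp) (use pm in \<open>auto simp: is_pmf_def\<close>)
  then have "cond_mut_inf P f f g = 0" using z unfolding cond_mut_inf_def cond_ent_def by simp
  from cmi_zero_rect[OF pm this assms(3-5)] show ?thesis by auto
qed

lemma mgf_cong: "(\<And>w'. (f w' = f w) = (h w' = h w)) \<Longrightarrow> mgf P f w = mgf P h w"
  unfolding mgf_def by simp

lemma mgf_split:
  "mgf (joint p q) (\<lambda>w. (\<phi> (snd w), h (fst w))) (s,m)
     = (\<Sum>s'\<in>UNIV. if h s' = h s then p s' * Qf q \<phi> s' (\<phi> m) else 0)"
  unfolding mgf_joint Qf_def by (auto simp: sum_distrib_left intro!: sum.cong)

lemma Qf_unit: "is_pmf (q s) \<Longrightarrow> Qf q (\<lambda>m. ()) s b = 1"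
  unfolding Qf_def is_pmf_def by simp

lemma Qf_pos: assumes "\<forall>m. 0 \<le> q s m"
  shows "(0 < Qf q \<phi> s b) = (\<exists>m. \<phi> m = b \<and> 0 < q s m)"
proof
  assume "0 < Qf q \<phi> s b"
  then have "Qf q \<phi> s b \<noteq> 0" by simp
  then obtain m where "(if \<phi> m = b then q s m else 0) \<noteq> 0" unfolding Qf_def
    using sum.neutral[of UNIV "\<lambda>m. if \<phi> m = b then q s m else 0"] by blast
  then show "\<exists>m. \<phi> m = b \<and> 0 < q s m" using assms by (auto split: if_splits simp: order.order_iff_strict)
next
  assume "\<exists>m. \<phi> m = b \<and> 0 < q s m"
  then obtain m where "\<phi> m = b" "0 < q s m" by blast
  then show "0 < Qf q \<phi> s b" using Qf_ge[where q=q and s=s and m=m and \<phi>=\<phi>] assms by simp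
qed

lemma Qf_nn: "\<forall>m. 0 \<le> q s m \<Longrightarrow> 0 \<le> Qf q \<phi> s b"
  unfolding Qf_def by (intro sum_nonneg) auto

lemma extract_Q:
  assumes pp: "is_pmf p" and full: "\<forall>s. 0 < p s" and qp: "\<forall>s. is_pmf (q s)"
    and inj: "\<And>s s'. \<gamma> s = \<gamma> s' \<Longrightarrow> \<kappa> s = \<kappa> s' \<Longrightarrow> s = s'"
    and z: "cond_mut_inf (joint p q) (\<lambda>w. \<phi> (snd w)) (\<lambda>w. \<gamma> (fst w)) (\<lambda>w. \<kappa> (fst w)) = 0"
    and k: "\<kappa> s1 = \<kappa> s2"
  shows "Qf q \<phi> s1 bb = Qf q \<phi> s2 bb"
proof -
  define P where "P = joint p q"
  have Pp: "is_pmf P" unfolding P_def by (rule joint_pmf[OF pp qp])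
  have qn: "\<forall>m. 0 \<le> q s m" for s using qp unfolding is_pmf_def by blast
  have Ppos: "(0 < P (s,m)) = (0 < q s m)" for s m
    unfolding P_def joint_app using full[rule_format, of s] by (simp add: zero_less_mult_iff)
  define D where "D s = (\<Sum>s'\<in>UNIV. if \<kappa> s' = \<kappa> s then p s' else 0)" for s
  define A where "A s b = (\<Sum>s'\<in>UNIV. if \<kappa> s' = \<kappa> s then p s' * Qf q \<phi> s' b else 0)" for s b
  have Q1: "Qf q (\<lambda>m. ()) s u = 1" for s u
  proof -
    have "is_pmf (q s)" using qp by blast
    from Qf_unit[where q=q and s=s, OF this] show ?thesis .
  qed
  have Dk: "\<kappa> s = \<kappa> s' \<Longrightarrow> D s = D s'" for s s' unfolding D_def by simp
  have Ak: "\<kappa> s = \<kappa> s' \<Longrightarrow> A s b = A s' b" for s s' b unfolding A_def by simp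
  have Dpos: "0 < D s" for s
  proof -
    have "p s \<le> D s" using mgf_ge[of p s \<kappa>] pp unfolding is_pmf_def D_def mgf_def by blast
    then show ?thesis using full[rule_format, of s] by linarith
  qed
  have key: "Qf q \<phi> s (\<phi> m) * D s = A s (\<phi> m)" if qm: "0 < q s m" for s m
  proof -
    have pw: "0 < P (s,m)" using Ppos qm by simp
    have c: "mgf P (\<lambda>w. (\<phi> (snd w), \<gamma> (fst w), \<kappa> (fst w))) (s,m) = p s * Qf q \<phi> s (\<phi> m)"
    proof -
      have "mgf P (\<lambda>w. (\<phi> (snd w), \<gamma> (fst w), \<kappa> (fst w))) (s,m)
        = (\<Sum>s'\<in>UNIV. if (\<gamma> s', \<kappa> s') = (\<gamma> s, \<kappa> s) then p s' * Qf q \<phi> s' (\<phi> m) else 0)"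
        unfolding P_def using mgf_split[of p q \<phi> "\<lambda>s. (\<gamma> s, \<kappa> s)" s m] by simp
      also have "\<dots> = (\<Sum>s'\<in>UNIV. if s' = s then p s' * Qf q \<phi> s' (\<phi> m) else 0)"
        by (intro sum.cong refl) (auto dest: inj)
      finally show ?thesis by simp
    qed
    have d: "mgf P (\<lambda>w. \<kappa> (fst w)) (s,m) = D s"
    proof -
      have "mgf P (\<lambda>w. \<kappa> (fst w)) (s,m) = mgf P (\<lambda>w. ((\<lambda>m. ()) (snd w), \<kappa> (fst w))) (s,m)"
        by (rule mgf_cong) simp
      also have "\<dots> = D s" unfolding P_def D_def using mgf_split[of p q "\<lambda>m. ()" \<kappa> s m] by (simp only: Q1 mult_1_right)
      finally show ?thesis .
    qed
    have a: "mgf P (\<lambda>w. (\<phi> (snd w), \<kappa> (fst w))) (s,m) = A s (\<phi> m)"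
      unfolding P_def mgf_split A_def ..
    have b: "mgf P (\<lambda>w. (\<gamma> (fst w), \<kappa> (fst w))) (s,m) = p s"
    proof -
      have "mgf P (\<lambda>w. (\<gamma> (fst w), \<kappa> (fst w))) (s,m) = mgf P (\<lambda>w. ((\<lambda>m. ()) (snd w), (\<lambda>s. (\<gamma> s, \<kappa> s)) (fst w))) (s,m)"
        by (rule mgf_cong) simp
      also have "\<dots> = (\<Sum>s'\<in>UNIV. if (\<gamma> s', \<kappa> s') = (\<gamma> s, \<kappa> s) then p s' else 0)"
        unfolding P_def using mgf_split[of p q "\<lambda>m. ()" "\<lambda>s. (\<gamma> s, \<kappa> s)" s m] by (simp only: Q1 mult_1_right)
      also have "\<dots> = (\<Sum>s'\<in>UNIV. if s' = s then p s' else 0)"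
        by (intro sum.cong refl) (auto dest: inj)
      finally show ?thesis by simp
    qed
    have "p s * Qf q \<phi> s (\<phi> m) * D s = A s (\<phi> m) * p s"
      using cmi_zero_prod[OF Pp z[folded P_def] pw] c d a b by simp
    then show ?thesis using full[rule_format, of s] by simp
  qed
  have trans: "\<exists>m. \<phi> m = bb \<and> 0 < q t2 m" if ex: "\<exists>m. \<phi> m = bb \<and> 0 < q t1 m" and kk: "\<kappa> t1 = \<kappa> t2" for t1 t2
  proof -
    obtain m1 where m1: "\<phi> m1 = bb" "0 < q t1 m1" using ex by blast
    have "\<exists>m2. 0 < q t2 m2"
    proof (rule ccontr)
      assume nex: "\<not> (\<exists>m2. 0 < q t2 m2)"
      have "q t2 m = 0" for m
      proof -
        have "0 \<le> q t2 m" using qn[of t2] by blast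
        moreover have "\<not> 0 < q t2 m" using nex by blast
        ultimately show ?thesis by linarith
      qed
      then have "\<forall>m. q t2 m = 0" by blast
      then show False using qp unfolding is_pmf_def by (metis sum.neutral zero_neq_one)
    qed
    then obtain m2 where m2: "0 < q t2 m2" by blast
    have "\<exists>w. 0 < P w \<and> \<phi> (snd w) = \<phi> (snd (t1,m1)) \<and> \<gamma> (fst w) = \<gamma> (fst (t2,m2)) \<and> \<kappa> (fst w) = \<kappa> (fst (t1,m1))"
      by (rule cmi_zero_rect[OF Pp z[folded P_def]]) (use m1 m2 Ppos kk in auto)
    then obtain s m where w: "0 < P (s,m)" "\<phi> m = bb" "\<gamma> s = \<gamma> t2" "\<kappa> s = \<kappa> t1"
      using m1 by auto
    then have "s = t2" using inj kk by metis
    then show ?thesis using w Ppos[of s m] by (intro exI[of _ m]) simp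
  qed
  show ?thesis
  proof (cases "\<exists>m. \<phi> m = bb \<and> 0 < q s1 m")
    case True
    then obtain m1 where m1: "\<phi> m1 = bb" "0 < q s1 m1" by blast
    obtain m2 where m2: "\<phi> m2 = bb" "0 < q s2 m2" using trans[OF True k] by blast
    have "Qf q \<phi> s1 bb * D s1 = Qf q \<phi> s2 bb * D s2"
      using key[OF m1(2)] key[OF m2(2)] m1 m2 Ak[OF k] by simp
    then show ?thesis using Dk[OF k] Dpos[of s1] by simp
  next
    case False
    then have "\<not> (\<exists>m. \<phi> m = bb \<and> 0 < q s2 m)" using trans[of s2 s1] k by auto
    then have "\<not> 0 < Qf q \<phi> s2 bb" "\<not> 0 < Qf q \<phi> s1 bb"
      using False Qf_pos[where q=q and s=s2 and \<phi>=\<phi> and b=bb, OF qn] Qf_pos[where q=q and s=s1 and \<phi>=\<phi> and b=bb, OF qn]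
      by simp_all
    then show ?thesis using Qf_nn[where q=q and s=s1 and \<phi>=\<phi> and b=bb, OF qn] Qf_nn[where q=q and s=s2 and \<phi>=\<phi> and b=bb, OF qn] by linarith
  qed
qed



lemma Qf_comp: "Qf q (\<lambda>m. \<psi> (\<phi> m)) s b = (\<Sum>b'\<in>range \<phi>. if \<psi> b' = b then Qf q \<phi> s b' else 0)"
proof -
  have "(\<Sum>b'\<in>range \<phi>. if \<psi> b' = b then Qf q \<phi> s b' else 0)
      = (\<Sum>b'\<in>range \<phi>. \<Sum>m\<in>UNIV. if \<phi> m = b' then (if \<psi> b' = b then q s m else 0) else 0)"
  proof (rule sum.cong[OF refl])
    fix b' show "(if \<psi> b' = b then Qf q \<phi> s b' else 0) = (\<Sum>m\<in>UNIV. if \<phi> m = b' then (if \<psi> b' = b then q s m else 0) else 0)"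
      by (cases "\<psi> b' = b") (simp_all add: Qf_def if_distrib cong: if_cong)
  qed
  also have "\<dots> = (\<Sum>m\<in>UNIV. \<Sum>b'\<in>range \<phi>. if \<phi> m = b' then (if \<psi> b' = b then q s m else 0) else 0)"
    by (rule sum.swap)
  also have "\<dots> = (\<Sum>m\<in>UNIV. if \<psi> (\<phi> m) = b then q s m else 0)"
    by (intro sum.cong refl) simp
  finally show ?thesis unfolding Qf_def by simp
qed

lemma Qf_comp_dep: assumes h: "\<And>b'. Qf q \<phi> s b' = Qf q \<phi> s' b'"
  shows "Qf q (\<lambda>m. \<psi> (\<phi> m)) s b = Qf q (\<lambda>m. \<psi> (\<phi> m)) s' b"
  by (simp only: Qf_comp[where \<psi>=\<psi> and \<phi>=\<phi>] h)

lemma group_Qf: "(\<Sum>m\<in>UNIV. q s m * L (\<phi> m)) = (\<Sum>b\<in>range \<phi>. L b * Qf q \<phi> s b)"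
proof -
  have "(\<Sum>b\<in>range \<phi>. L b * Qf q \<phi> s b) = (\<Sum>b\<in>range \<phi>. \<Sum>m\<in>UNIV. if \<phi> m = b then L b * q s m else 0)"
    unfolding Qf_def sum_distrib_left by (intro sum.cong refl) auto
  also have "\<dots> = (\<Sum>m\<in>UNIV. \<Sum>b\<in>range \<phi>. if \<phi> m = b then L b * q s m else 0)"
    by (rule sum.swap)
  also have "\<dots> = (\<Sum>m\<in>UNIV. q s m * L (\<phi> m))"
    by (intro sum.cong refl) simp
  finally show ?thesis by simp
qed

lemma share_ent:
  assumes pp: "is_pmf p" and qp: "\<forall>s. is_pmf (q s)"
    and hc: "\<And>s s' b. Qf q \<phi> s b = Qf q \<phi> s' b"
  shows "ent (joint p q) (\<lambda>w. \<phi> (snd w)) = - (\<Sum>b\<in>range \<phi>. log 2 (Qf q \<phi> s0 b) * Qf q \<phi> s0 b)"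
proof -
  have nn: "\<forall>w. 0 \<le> joint p q w" using joint_pmf[OF pp qp] unfolding is_pmf_def by blast
  have "ent (joint p q) (\<lambda>w. \<phi> (snd w)) = ent (joint p q) (\<lambda>w. (\<phi> (snd w), (\<lambda>s. ()) (fst w)))"
    by (rule ent_cong_supp[OF nn]) simp
  also have "\<dots> = ent p (\<lambda>s. ()) - (\<Sum>s\<in>UNIV. \<Sum>m\<in>UNIV. p s * q s m * log 2 (Qf q \<phi> s (\<phi> m)))"
    by (rule split_ent[OF pp qp hc])
  also have "(\<Sum>s\<in>UNIV. \<Sum>m\<in>UNIV. p s * q s m * log 2 (Qf q \<phi> s (\<phi> m)))
     = (\<Sum>s\<in>UNIV. p s * (\<Sum>b\<in>range \<phi>. log 2 (Qf q \<phi> s0 b) * Qf q \<phi> s0 b))"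
  proof (rule sum.cong[OF refl])
    fix s
    have "(\<Sum>m\<in>UNIV. p s * q s m * log 2 (Qf q \<phi> s (\<phi> m))) = p s * (\<Sum>m\<in>UNIV. q s m * log 2 (Qf q \<phi> s0 (\<phi> m)))"
      by (simp add: sum_distrib_left mult.assoc hc[where s=s and s'=s0])
    also have "\<dots> = p s * (\<Sum>b\<in>range \<phi>. log 2 (Qf q \<phi> s0 b) * Qf q \<phi> s b)"
      by (subst group_Qf[where L = "\<lambda>b. log 2 (Qf q \<phi> s0 b)"]) simp
    also have "\<dots> = p s * (\<Sum>b\<in>range \<phi>. log 2 (Qf q \<phi> s0 b) * Qf q \<phi> s0 b)"
      by (simp add: hc[where s=s and s'=s0])
    finally show "(\<Sum>m\<in>UNIV. p s * q s m * log 2 (Qf q \<phi> s (\<phi> m))) = p s * (\<Sum>b\<in>range \<phi>. log 2 (Qf q \<phi> s0 b) * Qf q \<phi> s0 b)" .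
  qed
  also have "\<dots> = (\<Sum>b\<in>range \<phi>. log 2 (Qf q \<phi> s0 b) * Qf q \<phi> s0 b)"
    using pp unfolding is_pmf_def by (simp add: sum_distrib_right[symmetric])
  finally show ?thesis using ent_const[OF pp] by simp
qed

lemma inst:
  assumes pp: "is_pmf p" and qp: "\<forall>s. is_pmf (q s)"
    and cAB: "\<And>s m s' m'. 0 < q s m \<Longrightarrow> 0 < q s' m' \<Longrightarrow> \<phi>A m = \<phi>A m' \<Longrightarrow> \<phi>B m = \<phi>B m' \<Longrightarrow> u s = u s'"
    and cAC: "\<And>s m s' m'. 0 < q s m \<Longrightarrow> 0 < q s' m' \<Longrightarrow> \<phi>A m = \<phi>A m' \<Longrightarrow> \<phi>C m = \<phi>C m' \<Longrightarrow> v s = v s'"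
    and QB: "\<And>s s' b. Qf q \<phi>B s b = Qf q \<phi>B s' b"
    and QBC: "\<And>s s' b. r s = r s' \<Longrightarrow> Qf q (\<lambda>m. (\<phi>B m, \<phi>C m)) s b = Qf q (\<lambda>m. (\<phi>B m, \<phi>C m)) s' b"
  shows "ent p u + ent p (\<lambda>s. (u s, v s, r s)) - ent p (\<lambda>s. (u s, r s)) \<le> ent (joint p q) (\<lambda>w. \<phi>A (snd w))"
proof -
  define P where "P = joint p q"
  have Pp: "is_pmf P" unfolding P_def by (rule joint_pmf[OF pp qp])
  have nn: "\<forall>w. 0 \<le> P w" using Pp unfolding is_pmf_def by blast
  have qpos: "0 < q (fst w) (snd w)" if "0 < P w" for w
  proof -
    have "0 \<le> p (fst w)" using pp unfolding is_pmf_def by blast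
    moreover have "0 < p (fst w) * q (fst w) (snd w)" using that unfolding P_def joint_def by (simp add: case_prod_beta)
    ultimately show ?thesis by (simp add: zero_less_mult_iff)
  qed
  have T: "ent P (\<lambda>w. h (fst w)) = ent p h" for h :: "_ \<Rightarrow> 'v"
    unfolding P_def by (rule transfer_ent[OF pp qp])
  have ind: "ent P (\<lambda>w. (u (fst w), \<phi>B (snd w))) = ent P (\<lambda>w. u (fst w)) + ent P (\<lambda>w. \<phi>B (snd w))"
  proof -
    have e1: "ent P (\<lambda>w. (u (fst w), \<phi>B (snd w))) = ent P (\<lambda>w. (\<phi>B (snd w), u (fst w)))"
      by (rule ent_cong_supp[OF nn]) auto
    have e2: "ent P (\<lambda>w. \<phi>B (snd w)) = ent P (\<lambda>w. (\<phi>B (snd w), (\<lambda>s. ()) (fst w)))"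
      by (rule ent_cong_supp[OF nn]) auto
    have s1: "ent P (\<lambda>w. (\<phi>B (snd w), u (fst w))) = ent p u - (\<Sum>s\<in>UNIV. \<Sum>m\<in>UNIV. p s * q s m * log 2 (Qf q \<phi>B s (\<phi>B m)))"
      unfolding P_def by (rule split_ent[OF pp qp QB])
    have s2: "ent P (\<lambda>w. (\<phi>B (snd w), (\<lambda>s. ()) (fst w))) = ent p (\<lambda>s. ()) - (\<Sum>s\<in>UNIV. \<Sum>m\<in>UNIV. p s * q s m * log 2 (Qf q \<phi>B s (\<phi>B m)))"
      unfolding P_def by (rule split_ent[OF pp qp QB])
    show ?thesis using e1 e2 s1 s2 T[of u] ent_const[OF pp] by simp
  qed
  have ci: "ent P (\<lambda>w. (\<phi>B (snd w), \<phi>C (snd w), u (fst w), v (fst w), r (fst w))) - ent P (\<lambda>w. (\<phi>B (snd w), \<phi>C (snd w), u (fst w), r (fst w)))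
     = ent P (\<lambda>w. (u (fst w), v (fst w), r (fst w))) - ent P (\<lambda>w. (u (fst w), r (fst w)))"
  proof -
    have e1: "ent P (\<lambda>w. (\<phi>B (snd w), \<phi>C (snd w), u (fst w), v (fst w), r (fst w)))
      = ent P (\<lambda>w. ((\<lambda>m. (\<phi>B m, \<phi>C m)) (snd w), (\<lambda>s. (u s, v s, r s)) (fst w)))"
      by (rule ent_cong_supp[OF nn]) auto
    have e2: "ent P (\<lambda>w. (\<phi>B (snd w), \<phi>C (snd w), u (fst w), r (fst w)))
      = ent P (\<lambda>w. ((\<lambda>m. (\<phi>B m, \<phi>C m)) (snd w), (\<lambda>s. (u s, r s)) (fst w)))"
      by (rule ent_cong_supp[OF nn]) auto
    have s1: "ent P (\<lambda>w. ((\<lambda>m. (\<phi>B m, \<phi>C m)) (snd w), (\<lambda>s. (u s, v s, r s)) (fst w)))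
      = ent p (\<lambda>s. (u s, v s, r s)) - (\<Sum>s\<in>UNIV. \<Sum>m\<in>UNIV. p s * q s m * log 2 (Qf q (\<lambda>m. (\<phi>B m, \<phi>C m)) s (\<phi>B m, \<phi>C m)))"
      unfolding P_def by (rule split_ent[OF pp qp]) (auto intro: QBC)
    have s2: "ent P (\<lambda>w. ((\<lambda>m. (\<phi>B m, \<phi>C m)) (snd w), (\<lambda>s. (u s, r s)) (fst w)))
      = ent p (\<lambda>s. (u s, r s)) - (\<Sum>s\<in>UNIV. \<Sum>m\<in>UNIV. p s * q s m * log 2 (Qf q (\<lambda>m. (\<phi>B m, \<phi>C m)) s (\<phi>B m, \<phi>C m)))"
      unfolding P_def by (rule split_ent[OF pp qp]) (auto intro: QBC)
    show ?thesis using e1 e2 s1 s2 T[of "\<lambda>s. (u s, v s, r s)"] T[of "\<lambda>s. (u s, r s)"] by simp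
  qed
  have "ent P (\<lambda>w. u (fst w)) + ent P (\<lambda>w. (u (fst w), v (fst w), r (fst w))) - ent P (\<lambda>w. (u (fst w), r (fst w)))
     \<le> ent P (\<lambda>w. \<phi>A (snd w))"
  proof (rule chain_bound[OF Pp _ _ ind ci])
    fix w w' assume "0 < P w" "0 < P w'" "\<phi>A (snd w) = \<phi>A (snd w')" "\<phi>B (snd w) = \<phi>B (snd w')"
    then show "u (fst w) = u (fst w')" using cAB qpos by blast
  next
    fix w w' assume "0 < P w" "0 < P w'" "\<phi>A (snd w) = \<phi>A (snd w')" "\<phi>C (snd w) = \<phi>C (snd w')"
    then show "v (fst w) = v (fst w')" using cAC qpos by blast
  qed
  then show ?thesis using T[of u] T[of "\<lambda>s. (u s, v s, r s)"] T[of "\<lambda>s. (u s, r s)"] unfolding P_def by simp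
qed

lemma common_nn:
  fixes P :: "'o::finite \<Rightarrow> real" and U :: "'o \<Rightarrow> 'u" and V :: "'o \<Rightarrow> 'v"
  assumes pp: "is_pmf P" shows "0 \<le> common_inf P U V"
proof -
  let ?S = "{ent P (\<lambda>w. f (U w)) | (f :: 'u \<Rightarrow> nat) (g :: 'v \<Rightarrow> nat). \<forall>w. 0 < P w \<longrightarrow> f (U w) = g (V w)}"
  have nn: "\<forall>w. 0 \<le> P w" using pp unfolding is_pmf_def by blast
  have "ent P (\<lambda>w. (\<lambda>x. 0::nat) (U w)) \<in> ?S"
    by (intro CollectI exI[of _ "\<lambda>x::'u. 0::nat"] exI[of _ "\<lambda>x::'v. 0::nat"]) simp
  then have z: "0 \<in> ?S" using ent_const[OF pp, of "0::nat"] by simp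
  have bd: "e \<le> - (\<Sum>w\<in>UNIV. P w * log 2 (P w))" if "e \<in> ?S" for e
  proof -
    obtain f :: "'u \<Rightarrow> nat" where e: "e = ent P (\<lambda>w. f (U w))" using \<open>e \<in> ?S\<close> by blast
    have "P w * log 2 (P w) \<le> P w * log 2 (mgf P (\<lambda>w. f (U w)) w)" for w
    proof (cases "0 < P w")
      case True
      then show ?thesis using mgf_ge[OF nn, of w "\<lambda>w. f (U w)"] by (simp add: mult_left_mono)
    next
      case False then have "P w = 0" using nn[rule_format, of w] by linarith
      then show ?thesis by simp
    qed
    then have "(\<Sum>w\<in>UNIV. P w * log 2 (P w)) \<le> (\<Sum>w\<in>UNIV. P w * log 2 (mgf P (\<lambda>w. f (U w)) w))"
      by (rule sum_mono)
    then show ?thesis unfolding e ent_alt by simp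
  qed
  have "bdd_above ?S" using bd by (intro bdd_aboveI) blast
  then show ?thesis unfolding common_inf_def using cSup_upper[OF z] by blast
qed



lemma fin:
  assumes pp: "is_pmf p"
    and h1: "ent p u + ent p (\<lambda>s. (u s, v s, r s)) - ent p (\<lambda>s. (u s, r s)) \<le> L"
    and h2: "mut_inf p A B + cond_ent p C D \<le> ent p u + ent p (\<lambda>s. (u s, v s, r s)) - ent p (\<lambda>s. (u s, r s))"
  shows "res_inf p A B + cond_ent p C D \<le> L"
  using common_nn[OF pp, of A B] h1 h2 unfolding res_inf_def by linarith

lemma reord: "is_pmf p \<Longrightarrow> (\<And>w w'. (f w = f w') = (h w = h w')) \<Longrightarrow> ent p f = ent p h"
  by (rule ent_cong_supp) (auto simp: is_pmf_def)

theorem theorem11: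
  fixes p :: "'x::finite \<times> 'y::finite \<times> 'z::finite \<Rightarrow> real"
    and q :: "'x \<times> 'y \<times> 'z \<Rightarrow> 'a::finite \<times> 'b::finite \<times> 'c::finite \<Rightarrow> real"
  assumes p_pmf: "is_pmf p"
    and full_support: "\<forall>t. 0 < p t"
    and scheme: "is_CMSS p q"
  shows
   "(\<forall>p' :: 'x \<times> 'y \<times> 'z \<Rightarrow> real. is_pmf p' \<and> char_graph_connected (margXY p') \<longrightarrow>
        ent (joint p q) m12 \<ge> res_inf p' pX pZ + cond_ent p' (\<lambda>t. (pX t, pY t)) pZ \<and>
        ent (joint p q) m12 \<ge> res_inf p' pY pZ + cond_ent p' (\<lambda>t. (pX t, pY t)) pZ) \<and>
    (\<forall>p' :: 'x \<times> 'y \<times> 'z \<Rightarrow> real. is_pmf p' \<and> char_graph_connected (margYZ p') \<longrightarrow>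
        ent (joint p q) m23 \<ge> res_inf p' pX pZ + cond_ent p' (\<lambda>t. (pY t, pZ t)) pX \<and>
        ent (joint p q) m23 \<ge> res_inf p' pX pY + cond_ent p' (\<lambda>t. (pY t, pZ t)) pX) \<and>
    (\<forall>p' :: 'x \<times> 'y \<times> 'z \<Rightarrow> real. is_pmf p' \<and> char_graph_connected (margXZ p') \<longrightarrow>
        ent (joint p q) m31 \<ge> res_inf p' pY pZ + cond_ent p' (\<lambda>t. (pX t, pZ t)) pY \<and>
        ent (joint p q) m31 \<ge> res_inf p' pX pY + cond_ent p' (\<lambda>t. (pX t, pZ t)) pY)"
proof -
  define P where "P = joint p q"
  have qp: "\<forall>s. is_pmf (q s)" using scheme unfolding is_CMSS_def by blast
  have c1: "cond_ent P sX (\<lambda>w. (m12 w, m31 w)) = 0" using scheme unfolding is_CMSS_def Let_def P_def by blast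
  have c2: "cond_ent P sY (\<lambda>w. (m12 w, m23 w)) = 0" using scheme unfolding is_CMSS_def Let_def P_def by blast
  have c3: "cond_ent P sZ (\<lambda>w. (m23 w, m31 w)) = 0" using scheme unfolding is_CMSS_def Let_def P_def by blast
  have pr1: "cond_mut_inf P (\<lambda>w. (m12 w, m31 w)) (\<lambda>w. (sY w, sZ w)) sX = 0"
    using scheme unfolding is_CMSS_def Let_def P_def by blast
  have pr2: "cond_mut_inf P (\<lambda>w. (m12 w, m23 w)) (\<lambda>w. (sX w, sZ w)) sY = 0"
    using scheme unfolding is_CMSS_def Let_def P_def by blast
  have pr3: "cond_mut_inf P (\<lambda>w. (m23 w, m31 w)) (\<lambda>w. (sX w, sY w)) sZ = 0"
    using scheme unfolding is_CMSS_def Let_def P_def by blast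
  have Pp: "is_pmf P" unfolding P_def by (rule joint_pmf[OF p_pmf qp])
  have Ppos: "(0 < P (s,m)) = (0 < q s m)" for s m
    unfolding P_def joint_app using full_support[rule_format, of s] by (simp add: zero_less_mult_iff)

  have cX: "pX s = pX s'" if "0 < q s m" "0 < q s' m'" "fst m = fst m'" "snd (snd m) = snd (snd m')" for s m s' m'
    using corr[OF Pp c1, of "(s,m)" "(s',m')"] that Ppos by (simp add: sX_def pX_def m12_def m31_def)
  have cY: "pY s = pY s'" if "0 < q s m" "0 < q s' m'" "fst m = fst m'" "fst (snd m) = fst (snd m')" for s m s' m'
    using corr[OF Pp c2, of "(s,m)" "(s',m')"] that Ppos by (simp add: sY_def pY_def m12_def m23_def)
  have cZ: "pZ s = pZ s'" if "0 < q s m" "0 < q s' m'" "fst (snd m) = fst (snd m')" "snd (snd m) = snd (snd m')" for s m s' m'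
    using corr[OF Pp c3, of "(s,m)" "(s',m')"] that Ppos by (simp add: sZ_def pZ_def m23_def m31_def)

  have eX: "sX = (\<lambda>w. pX (fst w))" by (simp add: sX_def pX_def fun_eq_iff)
  have eY: "sY = (\<lambda>w. pY (fst w))" by (simp add: sY_def pY_def fun_eq_iff)
  have eZ: "sZ = (\<lambda>w. pZ (fst w))" by (simp add: sZ_def pZ_def fun_eq_iff)
  have e1231: "(\<lambda>w. (m12 w, m31 w)) = (\<lambda>w. (fst (snd w), snd (snd (snd w))))" by (simp add: m12_def m31_def)
  have e1223: "(\<lambda>w. (m12 w, m23 w)) = (\<lambda>w. (fst (snd w), fst (snd (snd w))))" by (simp add: m12_def m23_def)
  have e2331: "(\<lambda>w. (m23 w, m31 w)) = (\<lambda>w. (fst (snd (snd w)), snd (snd (snd w))))" by (simp add: m23_def m31_def)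

  have Q1: "Qf q (\<lambda>m. (fst m, snd (snd m))) s b = Qf q (\<lambda>m. (fst m, snd (snd m))) s' b" if "pX s = pX s'" for s s' b
  proof (rule extract_Q[OF p_pmf full_support qp, where \<gamma> = "\<lambda>s. (pY s, pZ s)" and \<kappa> = pX])
    show "\<And>s s'. (pY s, pZ s) = (pY s', pZ s') \<Longrightarrow> pX s = pX s' \<Longrightarrow> s = s'"
      by (auto simp: pX_def pY_def pZ_def prod_eq_iff)
    show "cond_mut_inf (joint p q) (\<lambda>w. (fst (snd w), snd (snd (snd w)))) (\<lambda>w. (pY (fst w), pZ (fst w))) (\<lambda>w. pX (fst w)) = 0"
      using pr1 unfolding P_def e1231 eX eY eZ .
  qed (rule that)
  have Q2: "Qf q (\<lambda>m. (fst m, fst (snd m))) s b = Qf q (\<lambda>m. (fst m, fst (snd m))) s' b" if "pY s = pY s'" for s s' b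
  proof (rule extract_Q[OF p_pmf full_support qp, where \<gamma> = "\<lambda>s. (pX s, pZ s)" and \<kappa> = pY])
    show "\<And>s s'. (pX s, pZ s) = (pX s', pZ s') \<Longrightarrow> pY s = pY s' \<Longrightarrow> s = s'"
      by (auto simp: pX_def pY_def pZ_def prod_eq_iff)
    show "cond_mut_inf (joint p q) (\<lambda>w. (fst (snd w), fst (snd (snd w)))) (\<lambda>w. (pX (fst w), pZ (fst w))) (\<lambda>w. pY (fst w)) = 0"
      using pr2 unfolding P_def e1223 eX eY eZ .
  qed (rule that)
  have Q3: "Qf q (\<lambda>m. (fst (snd m), snd (snd m))) s b = Qf q (\<lambda>m. (fst (snd m), snd (snd m))) s' b" if "pZ s = pZ s'" for s s' b
  proof (rule extract_Q[OF p_pmf full_support qp, where \<gamma> = "\<lambda>s. (pX s, pY s)" and \<kappa> = pZ])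
    show "\<And>s s'. (pX s, pY s) = (pX s', pY s') \<Longrightarrow> pZ s = pZ s' \<Longrightarrow> s = s'"
      by (auto simp: pX_def pY_def pZ_def prod_eq_iff)
    show "cond_mut_inf (joint p q) (\<lambda>w. (fst (snd (snd w)), snd (snd (snd w)))) (\<lambda>w. (pX (fst w), pY (fst w))) (\<lambda>w. pZ (fst w)) = 0"
      using pr3 unfolding P_def e2331 eX eY eZ .
  qed (rule that)

  have Q1s: "Qf q (\<lambda>m. (snd (snd m), fst m)) s b = Qf q (\<lambda>m. (snd (snd m), fst m)) s' b" if "pX s = pX s'" for s s' b
    using Qf_comp_dep[where \<psi> = "\<lambda>x. (snd x, fst x)" and \<phi> = "\<lambda>m. (fst m, snd (snd m))", OF Q1[OF that]] by simp
  have Q2s: "Qf q (\<lambda>m. (fst (snd m), fst m)) s b = Qf q (\<lambda>m. (fst (snd m), fst m)) s' b" if "pY s = pY s'" for s s' b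
    using Qf_comp_dep[where \<psi> = "\<lambda>x. (snd x, fst x)" and \<phi> = "\<lambda>m. (fst m, fst (snd m))", OF Q2[OF that]] by simp
  have Q3s: "Qf q (\<lambda>m. (snd (snd m), fst (snd m))) s b = Qf q (\<lambda>m. (snd (snd m), fst (snd m))) s' b" if "pZ s = pZ s'" for s s' b
    using Qf_comp_dep[where \<psi> = "\<lambda>x. (snd x, fst x)" and \<phi> = "\<lambda>m. (fst (snd m), snd (snd m))", OF Q3[OF that]] by simp

  have M12: "Qf q (\<lambda>m. fst m) s b = Qf q (\<lambda>m. fst m) s' b" for s s' b
  proof -
    have a: "Qf q (\<lambda>m. fst m) s b = Qf q (\<lambda>m. fst m) s' b" if "pX s = pX s'" for s s'
      using Qf_comp_dep[where \<psi> = fst and \<phi> = "\<lambda>m. (fst m, snd (snd m))", OF Q1[OF that]] by simp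
    have b: "Qf q (\<lambda>m. fst m) s b = Qf q (\<lambda>m. fst m) s' b" if "pY s = pY s'" for s s'
      using Qf_comp_dep[where \<psi> = fst and \<phi> = "\<lambda>m. (fst m, fst (snd m))", OF Q2[OF that]] by simp
    have "Qf q (\<lambda>m. fst m) s b = Qf q (\<lambda>m. fst m) (pX s, pY s', pZ s) b" by (rule a) (simp add: pX_def)
    also have "\<dots> = Qf q (\<lambda>m. fst m) s' b" by (rule b) (simp add: pY_def)
    finally show ?thesis .
  qed
  have M23: "Qf q (\<lambda>m. fst (snd m)) s b = Qf q (\<lambda>m. fst (snd m)) s' b" for s s' b
  proof -
    have a: "Qf q (\<lambda>m. fst (snd m)) s b = Qf q (\<lambda>m. fst (snd m)) s' b" if "pY s = pY s'" for s s'
      using Qf_comp_dep[where \<psi> = snd and \<phi> = "\<lambda>m. (fst m, fst (snd m))", OF Q2[OF that]] by simp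
    have b: "Qf q (\<lambda>m. fst (snd m)) s b = Qf q (\<lambda>m. fst (snd m)) s' b" if "pZ s = pZ s'" for s s'
      using Qf_comp_dep[where \<psi> = fst and \<phi> = "\<lambda>m. (fst (snd m), snd (snd m))", OF Q3[OF that]] by simp
    have "Qf q (\<lambda>m. fst (snd m)) s b = Qf q (\<lambda>m. fst (snd m)) (pX s, pY s, pZ s') b" by (rule a) (simp add: pY_def)
    also have "\<dots> = Qf q (\<lambda>m. fst (snd m)) s' b" by (rule b) (simp add: pZ_def)
    finally show ?thesis .
  qed
  have M31: "Qf q (\<lambda>m. snd (snd m)) s b = Qf q (\<lambda>m. snd (snd m)) s' b" for s s' b
  proof -
    have a: "Qf q (\<lambda>m. snd (snd m)) s b = Qf q (\<lambda>m. snd (snd m)) s' b" if "pX s = pX s'" for s s'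
      using Qf_comp_dep[where \<psi> = snd and \<phi> = "\<lambda>m. (fst m, snd (snd m))", OF Q1[OF that]] by simp
    have b: "Qf q (\<lambda>m. snd (snd m)) s b = Qf q (\<lambda>m. snd (snd m)) s' b" if "pZ s = pZ s'" for s s'
      using Qf_comp_dep[where \<psi> = snd and \<phi> = "\<lambda>m. (fst (snd m), snd (snd m))", OF Q3[OF that]] by simp
    have "Qf q (\<lambda>m. snd (snd m)) s b = Qf q (\<lambda>m. snd (snd m)) (pX s, pY s, pZ s') b" by (rule a) (simp add: pX_def)
    also have "\<dots> = Qf q (\<lambda>m. snd (snd m)) s' b" by (rule b) (simp add: pZ_def)
    finally show ?thesis .
  qed

  have L12: "ent (joint p q) m12 = ent (joint p' q) (\<lambda>w. fst (snd w))" if "is_pmf p'" for p'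
    using share_ent[OF p_pmf qp M12, of undefined] share_ent[OF that qp M12, of undefined]
    by (simp add: m12_def[abs_def])
  have L23: "ent (joint p q) m23 = ent (joint p' q) (\<lambda>w. fst (snd (snd w)))" if "is_pmf p'" for p'
    using share_ent[OF p_pmf qp M23, of undefined] share_ent[OF that qp M23, of undefined]
    by (simp add: m23_def[abs_def])
  have L31: "ent (joint p q) m31 = ent (joint p' q) (\<lambda>w. snd (snd (snd w)))" if "is_pmf p'" for p'
    using share_ent[OF p_pmf qp M31, of undefined] share_ent[OF that qp M31, of undefined]
    by (simp add: m31_def[abs_def])

  show ?thesis
  proof (intro conjI allI impI)
    fix p' :: "'x \<times> 'y \<times> 'z \<Rightarrow> real" assume h: "is_pmf p' \<and> char_graph_connected (margXY p')"
    then have pp: "is_pmf p'" by blast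
    have I: "ent p' pX + ent p' (\<lambda>s. (pX s, pY s, pZ s)) - ent p' (\<lambda>s. (pX s, pZ s)) \<le> ent (joint p' q) (\<lambda>w. fst (snd w))"
      by (rule inst[where \<phi>B = "\<lambda>m. snd (snd m)" and \<phi>C = "\<lambda>m. fst (snd m)", OF pp qp])
         (blast intro: cX cY cZ M12 M23 M31 Q1 Q2 Q3 Q1s Q2s Q3s)+
    have r: "ent p' (\<lambda>t. ((pX t, pY t), pZ t)) = ent p' (\<lambda>s. (pX s, pY s, pZ s))" by (rule reord[OF pp]) auto
    show "res_inf p' pX pZ + cond_ent p' (\<lambda>t. (pX t, pY t)) pZ \<le> ent (joint p q) m12"
      unfolding L12[OF pp] by (rule fin[OF pp I]) (use r in \<open>simp add: mut_inf_def cond_ent_def\<close>)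
  next
    fix p' :: "'x \<times> 'y \<times> 'z \<Rightarrow> real" assume h: "is_pmf p' \<and> char_graph_connected (margXY p')"
    then have pp: "is_pmf p'" by blast
    have I: "ent p' pY + ent p' (\<lambda>s. (pY s, pX s, pZ s)) - ent p' (\<lambda>s. (pY s, pZ s)) \<le> ent (joint p' q) (\<lambda>w. fst (snd w))"
      by (rule inst[where \<phi>B = "\<lambda>m. fst (snd m)" and \<phi>C = "\<lambda>m. snd (snd m)", OF pp qp])
         (blast intro: cX cY cZ M12 M23 M31 Q1 Q2 Q3 Q1s Q2s Q3s)+
    have r: "ent p' (\<lambda>t. ((pX t, pY t), pZ t)) = ent p' (\<lambda>s. (pY s, pX s, pZ s))" by (rule reord[OF pp]) auto
    show "res_inf p' pY pZ + cond_ent p' (\<lambda>t. (pX t, pY t)) pZ \<le> ent (joint p q) m12"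
      unfolding L12[OF pp] by (rule fin[OF pp I]) (use r in \<open>simp add: mut_inf_def cond_ent_def\<close>)
  next
    fix p' :: "'x \<times> 'y \<times> 'z \<Rightarrow> real" assume h: "is_pmf p' \<and> char_graph_connected (margYZ p')"
    then have pp: "is_pmf p'" by blast
    have I: "ent p' pZ + ent p' (\<lambda>s. (pZ s, pY s, pX s)) - ent p' (\<lambda>s. (pZ s, pX s)) \<le> ent (joint p' q) (\<lambda>w. fst (snd (snd w)))"
      by (rule inst[where \<phi>B = "\<lambda>m. snd (snd m)" and \<phi>C = "\<lambda>m. fst m", OF pp qp])
         (blast intro: cX cY cZ M12 M23 M31 Q1 Q2 Q3 Q1s Q2s Q3s)+
    have r: "ent p' (\<lambda>t. ((pY t, pZ t), pX t)) = ent p' (\<lambda>s. (pZ s, pY s, pX s))" by (rule reord[OF pp]) auto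
    have r2: "ent p' (\<lambda>t. (pX t, pZ t)) = ent p' (\<lambda>s. (pZ s, pX s))" by (rule reord[OF pp]) auto
    show "res_inf p' pX pZ + cond_ent p' (\<lambda>t. (pY t, pZ t)) pX \<le> ent (joint p q) m23"
      unfolding L23[OF pp] by (rule fin[OF pp I]) (use r r2 in \<open>simp add: mut_inf_def cond_ent_def\<close>)
  next
    fix p' :: "'x \<times> 'y \<times> 'z \<Rightarrow> real" assume h: "is_pmf p' \<and> char_graph_connected (margYZ p')"
    then have pp: "is_pmf p'" by blast
    have I: "ent p' pY + ent p' (\<lambda>s. (pY s, pZ s, pX s)) - ent p' (\<lambda>s. (pY s, pX s)) \<le> ent (joint p' q) (\<lambda>w. fst (snd (snd w)))"
      by (rule inst[where \<phi>B = "\<lambda>m. fst m" and \<phi>C = "\<lambda>m. snd (snd m)", OF pp qp])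
         (blast intro: cX cY cZ M12 M23 M31 Q1 Q2 Q3 Q1s Q2s Q3s)+
    have r: "ent p' (\<lambda>t. ((pY t, pZ t), pX t)) = ent p' (\<lambda>s. (pY s, pZ s, pX s))" by (rule reord[OF pp]) auto
    have r2: "ent p' (\<lambda>t. (pX t, pY t)) = ent p' (\<lambda>s. (pY s, pX s))" by (rule reord[OF pp]) auto
    show "res_inf p' pX pY + cond_ent p' (\<lambda>t. (pY t, pZ t)) pX \<le> ent (joint p q) m23"
      unfolding L23[OF pp] by (rule fin[OF pp I]) (use r r2 in \<open>simp add: mut_inf_def cond_ent_def\<close>)
  next
    fix p' :: "'x \<times> 'y \<times> 'z \<Rightarrow> real" assume h: "is_pmf p' \<and> char_graph_connected (margXZ p')"
    then have pp: "is_pmf p'" by blast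
    have I: "ent p' pZ + ent p' (\<lambda>s. (pZ s, pX s, pY s)) - ent p' (\<lambda>s. (pZ s, pY s)) \<le> ent (joint p' q) (\<lambda>w. snd (snd (snd w)))"
      by (rule inst[where \<phi>B = "\<lambda>m. fst (snd m)" and \<phi>C = "\<lambda>m. fst m", OF pp qp])
         (blast intro: cX cY cZ M12 M23 M31 Q1 Q2 Q3 Q1s Q2s Q3s)+
    have r: "ent p' (\<lambda>t. ((pX t, pZ t), pY t)) = ent p' (\<lambda>s. (pZ s, pX s, pY s))" by (rule reord[OF pp]) auto
    have r2: "ent p' (\<lambda>t. (pY t, pZ t)) = ent p' (\<lambda>s. (pZ s, pY s))" by (rule reord[OF pp]) auto
    show "res_inf p' pY pZ + cond_ent p' (\<lambda>t. (pX t, pZ t)) pY \<le> ent (joint p q) m31"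
      unfolding L31[OF pp] by (rule fin[OF pp I]) (use r r2 in \<open>simp add: mut_inf_def cond_ent_def\<close>)
  next
    fix p' :: "'x \<times> 'y \<times> 'z \<Rightarrow> real" assume h: "is_pmf p' \<and> char_graph_connected (margXZ p')"
    then have pp: "is_pmf p'" by blast
    have I: "ent p' pX + ent p' (\<lambda>s. (pX s, pZ s, pY s)) - ent p' (\<lambda>s. (pX s, pY s)) \<le> ent (joint p' q) (\<lambda>w. snd (snd (snd w)))"
      by (rule inst[where \<phi>B = "\<lambda>m. fst m" and \<phi>C = "\<lambda>m. fst (snd m)", OF pp qp])
         (blast intro: cX cY cZ M12 M23 M31 Q1 Q2 Q3 Q1s Q2s Q3s)+
    have r: "ent p' (\<lambda>t. ((pX t, pZ t), pY t)) = ent p' (\<lambda>s. (pX s, pZ s, pY s))" by (rule reord[OF pp]) auto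
    show "res_inf p' pX pY + cond_ent p' (\<lambda>t. (pX t, pZ t)) pY \<le> ent (joint p q) m31"
      unfolding L31[OF pp] by (rule fin[OF pp I]) (use r in \<open>simp add: mut_inf_def cond_ent_def\<close>)
  qed
qed


end
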